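(* Let $\zeta(n,k)$ be a binary linear code of length $n$ and dimension $k$ with parity-check matrix $H$, and let $s,p\in\mathbb{N}$ with $0\le s\le k$, $0\le p\le n$, $s+p\le n$. Let $X$ be a random binary string of length $n-p-s$ and let $Z$ (the eavesdropper's information) be a discrete random variable jointly distributed with $X$. In the $sp$-protocol, let $R_p$ and $R_s$ be uniformly random binary strings of lengths $p$ and $s$, independent of each other and of $(X,Z)$; let $g$ be a fixed permutation of the $n$ coordinate positions, and set $\hat X = g(X\,|\,R_p\,|\,R_s)$ (concatenation followed by the permutation). The public communication is $C = (H\hat X^T, R_s)$, of length $|C| = n-k+s$. Let $R = \frac{k-s}{n-s-p}$ be the rate of the code obtained from $\zeta(n,k)$ by puncturing $p$ and shortening $s$ symbols, and let $|X| = n-p-s$. Then for any security constant $t\ge 0$, with probability at least $1-2^{-t}$ over the realization $(z,c)$ of $(Z,C)$, $$H_\infty(\hat X\mid Z=z, C=c) \ge H_\infty(X\mid Z) - |X|(1-R) - t.$$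
   Context: Min-entropy: $H_\infty(X) = -\log\max_x P_X(x)$; conditional min-entropy $H_\infty(X\mid Z) = \min_z H_\infty(X\mid Z=z)$ with $H_\infty(X\mid Z=z) = -\log\max_x P_{X\mid Z}(x\mid z)$, minimum over $z$ with positive probability. The syndrome of a length-$n$ binary vector $v$ is $Hv^T$. The paper writes the conclusion as "$H_\infty(\hat X\mid ZC)\ge H_\infty(X\mid Z)-|X|(1-R)-t$ with probability $1-2^{-t}$", meaning the bound holds for the realized values of the eavesdropper's information and the public communication except with probability at most $2^{-t}$. *)

theory Defs
  imports "HOL-Probability.Probability" "HOL-Combinatorics.Permutations"
begin

text \<open>Binary vectors are bool lists (True = 1). Inner product over GF(2).\<close>
definition gf2_inner :: "bool list \<Rightarrow> bool list \<Rightarrow> bool" where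
  "gf2_inner u v = odd (card {i. i < length u \<and> i < length v \<and> u ! i \<and> v ! i})"

text \<open>Syndrome H v^T, H given as the list of its rows.\<close>
definition syndrome :: "bool list list \<Rightarrow> bool list \<Rightarrow> bool list" where
  "syndrome H v = map (\<lambda>row. gf2_inner row v) H"

definition code_of :: "bool list list \<Rightarrow> nat \<Rightarrow> bool list set" where
  "code_of H n = {v. length v = n \<and> syndrome H v = replicate (length H) False}"

text \<open>H is an (n-k) x n parity-check matrix of a binary linear code zeta(n,k) of
  length n and dimension k (a k-dimensional GF(2)-subspace has 2^k elements).\<close>
definition parity_check_matrix :: "bool list list \<Rightarrow> nat \<Rightarrow> nat \<Rightarrow> bool" where
  "parity_check_matrix H n k \<longleftrightarrow> k \<le> n \<and> length H = n - k \<and>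
     (\<forall>row \<in> set H. length row = n) \<and> card (code_of H n) = 2 ^ k"

definition apply_perm :: "(nat \<Rightarrow> nat) \<Rightarrow> bool list \<Rightarrow> bool list" where
  "apply_perm g v = map (\<lambda>i. v ! g i) [0..<length v]"

definition uniform_bits :: "nat \<Rightarrow> bool list pmf" where
  "uniform_bits l = pmf_of_set {r. length r = l}"

definition marg2 :: "('a \<times> 'b) pmf \<Rightarrow> 'b \<Rightarrow> real" where
  "marg2 M b = measure_pmf.prob M {q. snd q = b}"

definition min_entropy_given :: "('a \<times> 'b) pmf \<Rightarrow> 'b \<Rightarrow> real" where
  "min_entropy_given M b = - log 2 (SUP a. pmf M (a, b) / marg2 M b)"

definition cond_min_entropy :: "('a \<times> 'b) pmf \<Rightarrow> real" where
  "cond_min_entropy M = (INF b \<in> {b. marg2 M b > 0}. min_entropy_given M b)"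

definition sp_protocol :: "bool list list \<Rightarrow> (nat \<Rightarrow> nat) \<Rightarrow> nat \<Rightarrow> nat \<Rightarrow>
    (bool list \<times> 'z) pmf \<Rightarrow> (bool list \<times> ('z \<times> (bool list \<times> bool list))) pmf" where
  "sp_protocol H g p s M =
     do { (x, z) \<leftarrow> M; rp \<leftarrow> uniform_bits p; rs \<leftarrow> uniform_bits s;
          let xh = apply_perm g (x @ rp @ rs);
          return_pmf (xh, (z, (syndrome H xh, rs))) }"

end

theory Submission imports Defs begin

no_notation Infinite_Sum.abs_summable_on (infixr \<open>abs'_summable'_on\<close> 46)

lemma bad_c:
  fixes Q :: "('z \<times> 'c) pmf" and \<delta> :: real
  assumes "\<delta> \<ge> 0"
  shows "measure_pmf.prob Q {zc. snd zc = c \<and> pmf Q zc < \<delta> * pmf (map_pmf fst Q) (fst zc)} \<le> \<delta>"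
proof -
  define B where "B = {z. pmf Q (z,c) < \<delta> * pmf (map_pmf fst Q) z}"
  have eq: "{zc. snd zc = c \<and> pmf Q zc < \<delta> * pmf (map_pmf fst Q) (fst zc)} = (\<lambda>z. (z,c)) ` B"
    by (auto simp: B_def)
  have inj: "inj_on (\<lambda>z. (z,c)) B" by (auto simp: inj_on_def)
  have "measure_pmf.prob Q ((\<lambda>z. (z,c)) ` B) = infsetsum (\<lambda>z. pmf Q (z,c)) B"
    by (simp add: measure_pmf_conv_infsetsum infsetsum_reindex[OF inj])
  also have "\<dots> \<le> infsetsum (\<lambda>z. \<delta> * pmf (map_pmf fst Q) z) B"
  proof (rule infsetsum_mono)
    show "(\<lambda>z. pmf Q (z,c)) abs_summable_on B"
      using abs_summable_on_reindex_iff[OF inj, of "pmf Q"] pmf_abs_summable by auto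
    show "(\<lambda>z. \<delta> * pmf (map_pmf fst Q) z) abs_summable_on B"
      by (intro abs_summable_on_cmult_right pmf_abs_summable)
  qed (auto simp: B_def)
  also have "\<dots> = \<delta> * measure_pmf.prob (map_pmf fst Q) B"
    by (simp add: measure_pmf_conv_infsetsum infsetsum_cmult_right pmf_abs_summable)
  also have "\<dots> \<le> \<delta>" using assms by (simp add: mult_left_le)
  finally show ?thesis by (simp add: eq)
qed

lemma marg2_pmf: "marg2 X b = pmf (map_pmf snd X) b"
  by (simp add: marg2_def pmf_map vimage_def)

lemma pmf_le_marg2: "pmf X (a,b) \<le> marg2 X b"
proof -
  have "pmf X (a,b) = measure_pmf.prob X {(a,b)}" by (simp add: measure_pmf_single)
  also have "\<dots> \<le> marg2 X b" unfolding marg2_def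
    by (rule measure_pmf.finite_measure_mono) auto
  finally show ?thesis .
qed

lemma sup_props:
  assumes "(a0, b) \<in> set_pmf X"
  defines "S \<equiv> (SUP a. pmf X (a,b) / marg2 X b)"
  shows "0 < S" "S \<le> 1" "\<And>a. pmf X (a,b) / marg2 X b \<le> S" "0 < marg2 X b"
proof -
  have p0: "pmf X (a0,b) > 0" using assms(1) by (simp add: pmf_positive)
  show m0: "0 < marg2 X b" using p0 pmf_le_marg2[of X a0 b] by linarith
  have le1: "pmf X (a,b) / marg2 X b \<le> 1" for a
    using m0 pmf_le_marg2[of X a b] by simp
  have bdd: "bdd_above (range (\<lambda>a. pmf X (a,b) / marg2 X b))"
    using le1 by (auto intro!: bdd_aboveI)
  show "\<And>a. pmf X (a,b) / marg2 X b \<le> S" unfolding S_def by (rule cSUP_upper[OF _ bdd]) auto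
  show "S \<le> 1" unfolding S_def by (rule cSUP_least) (auto simp: le1)
  have "pmf X (a0,b) / marg2 X b \<le> S" unfolding S_def by (rule cSUP_upper[OF _ bdd]) auto
  moreover have "pmf X (a0,b) / marg2 X b > 0" using p0 m0 by simp
  ultimately show "0 < S" by linarith
qed

lemma marg_pos_ex:
  assumes "marg2 X b > 0" shows "\<exists>a. (a,b) \<in> set_pmf X"
proof (rule ccontr)
  assume "\<not> ?thesis"
  then have "set_pmf X \<inter> {q. snd q = b} = {}" by auto
  then have "marg2 X b = 0" unfolding marg2_def using measure_pmf_zero_iff by blast
  with assms show False by simp
qed

lemma pmf_le_cond:
  assumes "(x,z) \<in> set_pmf M"
  shows "pmf M (x,z) \<le> 2 powr (- cond_min_entropy M) * marg2 M z"
proof -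
  define S where "S = (SUP a. pmf M (a,z) / marg2 M z)"
  note sp = sup_props[OF assms, folded S_def]
  have mz: "marg2 M z > 0" by (rule sp(4))
  have bdd: "bdd_below (min_entropy_given M ` {b. marg2 M b > 0})"
  proof (rule bdd_belowI[where m=0])
    fix y assume "y \<in> min_entropy_given M ` {b. marg2 M b > 0}"
    then obtain b where b2: "y = min_entropy_given M b" and b1: "b \<in> {b. 0 < marg2 M b}"
      by (rule imageE)
    have b: "marg2 M b > 0" "y = min_entropy_given M b" using b1 b2 by simp_all
    obtain a where "(a,b) \<in> set_pmf M" using marg_pos_ex[OF b(1)] by (elim exE)
    note sb = sup_props[OF this]
    have "log 2 (SUP a. pmf M (a,b) / marg2 M b) \<le> 0"
      using sb(1,2) log_le_zero_cancel_iff[of 2] by simp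
    then show "0 \<le> y" unfolding b(2) min_entropy_given_def by linarith
  qed
  have zin: "z \<in> {b. marg2 M b > 0}" using mz by blast
  have "cond_min_entropy M \<le> min_entropy_given M z"
    unfolding cond_min_entropy_def by (rule cINF_lower[OF bdd zin])
  then have lg: "log 2 S \<le> - cond_min_entropy M" unfolding min_entropy_given_def S_def by linarith
  have "S = 2 powr (log 2 S)" using sp(1) by (rule powr_log_cancel[symmetric, rotated 2]) auto
  also have "\<dots> \<le> 2 powr (- cond_min_entropy M)"
    by (rule powr_mono[OF lg]) auto
  finally have "S \<le> 2 powr (- cond_min_entropy M)" .
  moreover have "pmf M (x,z) / marg2 M z \<le> S" by (rule sp(3))
  ultimately have "pmf M (x,z) / marg2 M z \<le> 2 powr (- cond_min_entropy M)" by linarith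
  then show ?thesis using mz by (simp add: divide_le_eq)
qed


lemma ub_fin: "finite {r::bool list. length r = l}"
  using finite_lists_length_eq[of "UNIV::bool set" l] by simp

lemma ub_card: "card {r::bool list. length r = l} = 2 ^ l"
  using card_lists_length_eq[of "UNIV::bool set" l] by simp

lemma ub_set: "set_pmf (uniform_bits l) = {r. length r = l}"
proof -
  have "{r::bool list. length r = l} \<noteq> {}" by (auto intro: exI[of _ "replicate l False"])
  then show ?thesis unfolding uniform_bits_def using ub_fin by simp
qed

lemma ub_pmf: "pmf (uniform_bits l) r \<le> 1 / 2 ^ l"
proof -
  have ne: "{r::bool list. length r = l} \<noteq> {}" by (auto intro: exI[of _ "replicate l False"])
  have "pmf (uniform_bits l) r = indicator {r::bool list. length r = l} r / 2 ^ l"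
    unfolding uniform_bits_def using ne ub_fin[of l] ub_card[of l] by simp
  then show ?thesis by (simp add: indicator_def)
qed

lemma length_apply_perm[simp]: "length (apply_perm g v) = length v"
  by (simp add: apply_perm_def)

lemma length_syndrome[simp]: "length (syndrome H v) = length H"
  by (simp add: syndrome_def)

lemma apply_perm_inj:
  assumes g: "g permutes {..<n}" and "length v = n" "length w = n"
    and eq: "apply_perm g v = apply_perm g w"
  shows "v = w"
proof (rule nth_equalityI)
  show "length v = length w" using assms by simp
  fix j assume "j < length v"
  then have "j \<in> g ` {..<n}" using permutes_image[OF g] assms by simp
  then obtain i where i: "i < n" "j = g i" by auto
  have "apply_perm g v ! i = v ! g i" using i assms by (simp add: apply_perm_def)
  moreover have "apply_perm g w ! i = w ! g i" using i assms by (simp add: apply_perm_def)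
  ultimately show "v ! j = w ! j" using eq i by simp
qed

lemma pow_half: "1 / (2::real) ^ p * (1 / 2 ^ s) = 2 powr (- (real p + real s))"
proof -
  have "(2::real) powr (- (real p + real s)) = inverse (2 powr (real p + real s))"
    by (rule powr_minus)
  also have "(2::real) powr (real p + real s) = 2 ^ (p + s)"
    using powr_realpow[of 2 "p+s"] by simp
  finally have "(2::real) powr (- (real p + real s)) = inverse (2 ^ (p + s))" .
  also have "\<dots> = 1 / (2::real) ^ p * (1 / 2 ^ s)" by (simp add: power_add divide_inverse)
  finally show ?thesis by simp
qed

lemma B_bound:
  assumes "s \<le> k" "k \<le> n" "s + p \<le> n"
  shows "real n - real k - real p \<le> real (n - p - s) * (1 - real (k - s) / real (n - s - p))"
proof (cases "n - s - p = 0")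
  case True
  then show ?thesis using assms by simp
next
  case False
  then have "real (n - s - p) > 0" by simp
  then have "real (n - p - s) * (1 - real (k - s) / real (n - s - p)) = real (n - p - s) - real (k - s)"
    by (simp add: field_simps)
  then show ?thesis using assms by (simp add: of_nat_diff)
qed


theorem theorem2:
  fixes H :: "bool list list" and n k s p :: nat and g :: "nat \<Rightarrow> nat"
    and M :: "(bool list \<times> 'z) pmf" and t :: real
  assumes "parity_check_matrix H n k"
    and "s \<le> k" and "p \<le> n" and "s + p \<le> n"
    and "\<forall>xz \<in> set_pmf M. length (fst xz) = n - p - s"
    and "g permutes {..<n}"
    and "t \<ge> 0"
  shows "measure_pmf.prob (sp_protocol H g p s M)
           {q. min_entropy_given (sp_protocol H g p s M) (snd q)
                 \<ge> cond_min_entropy M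
                    - real (n - p - s) * (1 - real (k - s) / real (n - s - p)) - t}
         \<ge> 1 - 2 powr (- t)"
proof -
  note pcm = assms(1)[unfolded parity_check_matrix_def]
  have kn: "k \<le> n" and lH: "length H = n - k" using pcm by auto
  define D where "D = pair_pmf M (pair_pmf (uniform_bits p) (uniform_bits s))"
  define F :: "(bool list \<times> 'z) \<times> (bool list \<times> bool list) \<Rightarrow> bool list \<times> ('z \<times> (bool list \<times> bool list))"
    where "F = (\<lambda>((x,z),(rp,rs)). (apply_perm g (x @ rp @ rs),
                  (z, (syndrome H (apply_perm g (x @ rp @ rs)), rs))))"
  define P where "P = sp_protocol H g p s M"
  define Hm where "Hm = cond_min_entropy M"
  define B where "B = real (n - p - s) * (1 - real (k - s) / real (n - s - p))"
  define m where "m = n - k + s"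
  define \<delta> :: real where "\<delta> = 2 powr (- real m - t)"
  define K :: real where "K = 2 powr (- (real p + real s) - Hm)"
  have P_eq: "P = map_pmf F D"
    unfolding P_def sp_protocol_def D_def F_def pair_pmf_def
    by (simp add: map_bind_pmf bind_assoc_pmf bind_return_pmf Let_def split_beta')
  have setD: "set_pmf D = set_pmf M \<times> ({r. length r = p} \<times> {r. length r = s})"
    by (simp add: D_def ub_set)
  have injF: "inj_on F (set_pmf D)"
  proof (rule inj_onI)
    fix a b assume a: "a \<in> set_pmf D" and b: "b \<in> set_pmf D" and eq: "F a = F b"
    obtain x z rp rs where a': "a = ((x,z),(rp,rs))" by (metis prod.collapse)
    obtain x' z' rp' rs' where b': "b = ((x',z'),(rp',rs'))" by (metis prod.collapse)
    have la: "length x = n - p - s" "length rp = p" "length rs = s"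
      using a assms(5) by (auto simp: a' setD)
    have lb: "length x' = n - p - s" "length rp' = p" "length rs' = s"
      using b assms(5) by (auto simp: b' setD)
    have "(apply_perm g (x @ rp @ rs), (z, (syndrome H (apply_perm g (x @ rp @ rs)), rs))) =
          (apply_perm g (x' @ rp' @ rs'), (z', (syndrome H (apply_perm g (x' @ rp' @ rs')), rs')))"
      using eq unfolding F_def a' b' by (simp only: prod.case)
    then have cc: "apply_perm g (x @ rp @ rs) = apply_perm g (x' @ rp' @ rs') \<and>
       (z = z' \<and> (syndrome H (apply_perm g (x @ rp @ rs)) = syndrome H (apply_perm g (x' @ rp' @ rs')) \<and> rs = rs'))"
      unfolding prod.inject .
    from cc have zz: "z = z'" by (elim conjE)
    from cc have "apply_perm g (x @ rp @ rs) = apply_perm g (x' @ rp' @ rs')" by (elim conjE)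
    note peq = this
    have "x @ rp @ rs = x' @ rp' @ rs'"
      by (rule apply_perm_inj[OF assms(6) _ _ peq]) (use la lb assms(4) in simp_all)
    then have "x = x' \<and> rp = rp' \<and> rs = rs'" using la lb by (simp add: append_eq_append_conv)
    then show "a = b" using zz a' b' by simp
  qed
  have pmfK: "pmf P y \<le> K * marg2 M (fst (snd y))" for y
  proof (cases "y \<in> set_pmf P")
    case False
    then have "pmf P y = 0" by (simp add: set_pmf_eq)
    moreover have "0 \<le> K * marg2 M (fst (snd y))" by (simp add: K_def marg2_def)
    ultimately show ?thesis by simp
  next
    case True
    then obtain a where a: "a \<in> set_pmf D" "y = F a" by (auto simp: P_eq)
    obtain x z rp rs where a': "a = ((x,z),(rp,rs))" by (metis prod.collapse)
    have xz: "(x,z) \<in> set_pmf M" using a by (simp add: a' setD)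
    have "pmf P y = pmf D a" using a injF by (simp add: P_eq pmf_map_inj)
    also have "\<dots> = pmf M (x,z) * (pmf (uniform_bits p) rp * pmf (uniform_bits s) rs)"
      by (simp add: D_def a' pmf_pair)
    also have "\<dots> \<le> (2 powr (- Hm) * marg2 M z) * (1 / 2 ^ p * (1 / 2 ^ s))"
      by (intro mult_mono ub_pmf pmf_le_cond[OF xz, folded Hm_def]) (auto simp: marg2_def)
    also have "\<dots> = K * marg2 M z" by (simp add: pow_half K_def powr_realpow powr_diff powr_minus divide_inverse
         powr_add)
    finally show ?thesis using a by (simp add: a' F_def)
  qed
  define Q where "Q = map_pmf snd P"
  have Qfst: "map_pmf fst Q = map_pmf snd M"
  proof -
    have "map_pmf fst Q = map_pmf (fst \<circ> snd \<circ> F) D" by (simp add: Q_def P_eq pmf.map_comp comp_assoc)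
    also have "fst \<circ> snd \<circ> F = snd \<circ> fst" by (auto simp: F_def)
    also have "map_pmf (snd \<circ> fst) D = map_pmf snd M"
      by (simp add: pmf.map_comp[symmetric] D_def map_fst_pair_pmf)
    finally show ?thesis .
  qed
  have mM: "pmf (map_pmf fst Q) z = marg2 M z" for z by (simp add: Qfst marg2_pmf)
  have mP: "marg2 P zc = pmf Q zc" for zc by (simp add: Q_def marg2_pmf)
  define C0 where "C0 = {sy::bool list. length sy = n - k} \<times> {rs::bool list. length rs = s}"
  have finC0: "finite C0" by (simp add: C0_def ub_fin)
  have cardC0: "card C0 = 2 ^ m" by (simp add: C0_def ub_card card_cartesian_product m_def power_add)
  have setQ: "snd zc \<in> C0" if "zc \<in> set_pmf Q" for zc
  proof -
    from that obtain a where a: "a \<in> set_pmf D" "zc = snd (F a)" by (auto simp: Q_def P_eq)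
    obtain x z rp rs where a': "a = ((x,z),(rp,rs))" by (metis prod.collapse)
    show ?thesis using a lH by (auto simp: a' setD F_def C0_def)
  qed
  have dpos: "\<delta> > 0" by (simp add: \<delta>_def)
  define Bad where "Bad = {zc. pmf Q zc < \<delta> * pmf (map_pmf fst Q) (fst zc)}"
  define Bc where "Bc = (\<lambda>c. {zc. snd zc = c \<and> pmf Q zc < \<delta> * pmf (map_pmf fst Q) (fst zc)})"
  have "measure_pmf.prob Q Bad = measure_pmf.prob Q (Bad \<inter> set_pmf Q)"
    by (simp add: measure_Int_set_pmf)
  also have "\<dots> \<le> measure_pmf.prob Q (\<Union>c\<in>C0. Bc c)"
    by (rule measure_pmf.finite_measure_mono) (auto simp: Bad_def Bc_def dest: setQ)
  also have "\<dots> \<le> (\<Sum>c\<in>C0. measure_pmf.prob Q (Bc c))"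
    by (rule measure_pmf.finite_measure_subadditive_finite[OF finC0]) auto
  also have "\<dots> \<le> (\<Sum>c\<in>C0. \<delta>)"
    by (rule sum_mono) (unfold Bc_def, rule bad_c, use dpos in simp)
  also have "\<dots> = 2 powr (- t)"
  proof -
    have "(\<Sum>c\<in>C0. \<delta>) = 2 ^ m * \<delta>" by (simp add: cardC0)
    also have "(2::real) ^ m = 2 powr real m" by (simp add: powr_realpow)
    also have "2 powr real m * \<delta> = 2 powr (- t)" by (simp add: \<delta>_def powr_add[symmetric])
    finally show ?thesis .
  qed
  finally have badle: "measure_pmf.prob Q Bad \<le> 2 powr (- t)" .
  define G where "G = {q :: bool list \<times> ('z \<times> (bool list \<times> bool list)). min_entropy_given P (snd q) \<ge> Hm - B - t}"
  have sub: "{q. snd q \<notin> Bad} \<inter> set_pmf P \<subseteq> G"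
  proof
    fix q assume q: "q \<in> {q. snd q \<notin> Bad} \<inter> set_pmf P"
    obtain xh z c where q': "q = (xh, (z, c))" by (metis prod.collapse)
    have qP: "(xh, (z,c)) \<in> set_pmf P" using q by (simp add: q')
    have good: "\<delta> * marg2 M z \<le> marg2 P (z,c)"
      using q by (simp add: q' Bad_def mM mP not_less)
    define S where "S = (SUP a. pmf P (a, (z,c)) / marg2 P (z,c))"
    note sp = sup_props[OF qP, folded S_def]
    have mPpos: "marg2 P (z,c) > 0" by (rule sp(4))
    have Kpos: "K > 0" by (simp add: K_def)
    have "S \<le> K * marg2 M z / marg2 P (z,c)"
      unfolding S_def
    proof (rule cSUP_least)
      fix a show "pmf P (a, (z,c)) / marg2 P (z,c) \<le> K * marg2 M z / marg2 P (z,c)"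
        using pmfK[of "(a,(z,c))"] mPpos by (simp add: divide_right_mono)
    qed simp
    also have "\<dots> \<le> K / \<delta>"
    proof -
      have "marg2 M z \<le> marg2 P (z,c) / \<delta>" using good dpos by (simp add: le_divide_eq mult.commute)
      then have "marg2 M z / marg2 P (z,c) \<le> 1 / \<delta>"
        using mPpos dpos by (simp add: divide_le_eq)
      then have "K * (marg2 M z / marg2 P (z,c)) \<le> K * (1 / \<delta>)"
        using Kpos by (intro mult_left_mono) auto
      then show ?thesis by simp
    qed
    finally have SK: "S \<le> K / \<delta>" .
    have "K / \<delta> = 2 powr (- (real p + real s) - Hm + real m + t)"
    proof -
      have "K / \<delta> = 2 powr ((- (real p + real s) - Hm) - (- real m - t))"
        by (simp only: K_def \<delta>_def powr_diff)
      also have "(- (real p + real s) - Hm) - (- real m - t) = - (real p + real s) - Hm + real m + t"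
        by simp
      finally show ?thesis .
    qed
    then have "log 2 S \<le> - (real p + real s) - Hm + real m + t"
      using log_mono[of 2 S "K / \<delta>"] SK sp(1) by simp
    then have "min_entropy_given P (z,c) \<ge> real p + real s + Hm - real m - t"
      unfolding min_entropy_given_def S_def by linarith
    moreover have "real n - real k - real p \<le> B"
      unfolding B_def by (rule B_bound) (use assms kn in auto)
    moreover have "real m = real n - real k + real s" using kn by (simp add: m_def of_nat_diff)
    ultimately show "q \<in> G" by (simp add: G_def q')
  qed
  have "measure_pmf.prob P {q. snd q \<notin> Bad} = 1 - measure_pmf.prob P {q. snd q \<in> Bad}"
  proof -
    have "{q. snd q \<notin> Bad} = space (measure_pmf P) - {q. snd q \<in> Bad}" by auto
    then show ?thesis using measure_pmf.prob_compl[of "{q. snd q \<in> Bad}" P] by simp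
  qed
  also have "measure_pmf.prob P {q. snd q \<in> Bad} = measure_pmf.prob Q Bad"
    by (simp add: Q_def vimage_def)
  finally have "measure_pmf.prob P {q. snd q \<notin> Bad} \<ge> 1 - 2 powr (- t)" using badle by simp
  also have "measure_pmf.prob P {q. snd q \<notin> Bad} = measure_pmf.prob P ({q. snd q \<notin> Bad} \<inter> set_pmf P)"
    by (simp add: measure_Int_set_pmf)
  also have "\<dots> \<le> measure_pmf.prob P G"
    by (rule measure_pmf.finite_measure_mono[OF sub]) simp
  finally show ?thesis by (simp add: G_def P_def Hm_def B_def)
qed

end
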